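(* Let $\mathcal{V}$ be an inner product space, $\mathcal{L}$ a linear operator on $\mathcal{V}$, and $\mathcal{U}\subset\mathcal{V}$ the subspace spanned by an orthonormal system $\{\mathbf{v}_1,\dots,\mathbf{v}_K\}$. Suppose that $(1-\epsilon)\|\mathbf{v}_i\|^2\le\|\mathcal{L}\mathbf{v}_i\|^2\le(1+\epsilon)\|\mathbf{v}_i\|^2$ for all $1\le i\le K$, and $(1-\epsilon)\|\mathbf{v}_i\pm\mathbf{v}_j\|^2\le\|\mathcal{L}(\mathbf{v}_i\pm\mathbf{v}_j)\|^2\le(1+\epsilon)\|\mathbf{v}_i\pm\mathbf{v}_j\|^2$ for all $1\le i,j\le K$. Then $$(1-K\epsilon)\|\mathbf{w}\|^2\le\|\mathcal{L}\mathbf{w}\|^2\le(1+K\epsilon)\|\mathbf{w}\|^2\quad\text{for all }\mathbf{w}\in\mathcal{U}.$$ *)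

theory Defs
  imports "HOL-Analysis.Analysis"
begin

end

theory Submission
  imports Defs
begin

lemma sum_bound_aux:
  fixes c :: "nat \<Rightarrow> real" and B :: "nat \<Rightarrow> nat \<Rightarrow> real" and I :: "nat set"
  assumes fin: "finite I" and bnd: "\<And>i j. i \<in> I \<Longrightarrow> j \<in> I \<Longrightarrow> \<bar>B i j\<bar> \<le> e"
  shows "\<bar>\<Sum>i\<in>I. \<Sum>j\<in>I. c i * c j * B i j\<bar> \<le> e * real (card I) * (\<Sum>i\<in>I. (c i)\<^sup>2)"
proof -
  have t: "\<bar>c i * c j * B i j\<bar> \<le> e * ((c i)\<^sup>2 + (c j)\<^sup>2) / 2" if "i \<in> I" "j \<in> I" for i j
  proof -
    have b: "\<bar>B i j\<bar> \<le> e" using bnd that by blast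
    have "\<bar>c i * c j\<bar> \<le> ((c i)\<^sup>2 + (c j)\<^sup>2) / 2"
    proof -
      have "0 \<le> (\<bar>c i\<bar> - \<bar>c j\<bar>)\<^sup>2" by simp
      then show ?thesis by (simp add: power2_eq_square algebra_simps abs_mult)
    qed
    moreover have "0 \<le> e" using b by linarith
    ultimately have "\<bar>c i * c j\<bar> * \<bar>B i j\<bar> \<le> ((c i)\<^sup>2 + (c j)\<^sup>2) / 2 * e"
      using b by (intro mult_mono) auto
    then show ?thesis by (simp add: abs_mult algebra_simps)
  qed
  have "\<bar>\<Sum>i\<in>I. \<Sum>j\<in>I. c i * c j * B i j\<bar> \<le> (\<Sum>i\<in>I. \<Sum>j\<in>I. \<bar>c i * c j * B i j\<bar>)"
    by (rule order_trans[OF sum_abs]) (intro sum_mono sum_abs)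
  also have "\<dots> \<le> (\<Sum>i\<in>I. \<Sum>j\<in>I. e * ((c i)\<^sup>2 + (c j)\<^sup>2) / 2)"
    by (intro sum_mono t)
  also have "\<dots> = e / 2 * (\<Sum>i\<in>I. \<Sum>j\<in>I. (c i)\<^sup>2 + (c j)\<^sup>2)"
    by (simp add: sum_distrib_left)
  also have "(\<Sum>i\<in>I. \<Sum>j\<in>I. (c i)\<^sup>2 + (c j)\<^sup>2) = 2 * real (card I) * (\<Sum>i\<in>I. (c i)\<^sup>2)"
    by (simp add: sum.distrib sum_distrib_left sum_distrib_right algebra_simps)
  finally show ?thesis by simp
qed

theorem lemma3:
  fixes L :: "'a::real_inner \<Rightarrow> 'a" and v :: "nat \<Rightarrow> 'a"
    and K :: nat and \<epsilon> :: real and w :: 'a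
  assumes lin: "linear L"
    and orthonormal: "\<forall>i\<in>{1..K}. \<forall>j\<in>{1..K}. v i \<bullet> v j = (if i = j then 1 else 0)"
    and single: "\<forall>i\<in>{1..K}. (1 - \<epsilon>) * (norm (v i))\<^sup>2 \<le> (norm (L (v i)))\<^sup>2
                          \<and> (norm (L (v i)))\<^sup>2 \<le> (1 + \<epsilon>) * (norm (v i))\<^sup>2"
    and plus: "\<forall>i\<in>{1..K}. \<forall>j\<in>{1..K}.
                 (1 - \<epsilon>) * (norm (v i + v j))\<^sup>2 \<le> (norm (L (v i + v j)))\<^sup>2
               \<and> (norm (L (v i + v j)))\<^sup>2 \<le> (1 + \<epsilon>) * (norm (v i + v j))\<^sup>2"
    and minus: "\<forall>i\<in>{1..K}. \<forall>j\<in>{1..K}.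
                 (1 - \<epsilon>) * (norm (v i - v j))\<^sup>2 \<le> (norm (L (v i - v j)))\<^sup>2
               \<and> (norm (L (v i - v j)))\<^sup>2 \<le> (1 + \<epsilon>) * (norm (v i - v j))\<^sup>2"
    and w: "w \<in> span (v ` {1..K})"
  shows "(1 - real K * \<epsilon>) * (norm w)\<^sup>2 \<le> (norm (L w))\<^sup>2
       \<and> (norm (L w))\<^sup>2 \<le> (1 + real K * \<epsilon>) * (norm w)\<^sup>2"
proof -
  let ?I = "{1..K}"
  have inj: "inj_on v ?I"
  proof (rule inj_onI)
    fix i j assume ij: "i \<in> ?I" "j \<in> ?I" "v i = v j"
    show "i = j"
    proof (rule ccontr)
      assume "i \<noteq> j"
      then have "v i \<bullet> v j = 0" using orthonormal ij(1,2) by auto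
      moreover have "v i \<bullet> v i = 1" using orthonormal ij(1) by auto
      ultimately show False using ij by simp
    qed
  qed
  obtain u where u: "w = (\<Sum>x\<in>v ` ?I. u x *\<^sub>R x)"
    using w span_finite[of "v ` ?I"] by auto
  define c where "c i = u (v i)" for i
  have wc: "w = (\<Sum>i\<in>?I. c i *\<^sub>R v i)"
    using u sum.reindex[OF inj, of "\<lambda>x. u x *\<^sub>R x"] by (simp add: c_def)
  have Lv: "L (v i + v j) = L (v i) + L (v j)" "L (v i - v j) = L (v i) - L (v j)" for i j
    using lin by (simp_all add: linear_add linear_diff)
  have Lwc: "L w = (\<Sum>i\<in>?I. c i *\<^sub>R L (v i))"
    using lin by (simp add: wc linear_sum linear_scale)
  have nw: "(norm w)\<^sup>2 = (\<Sum>i\<in>?I. \<Sum>j\<in>?I. c i * c j * (v i \<bullet> v j))"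
    by (simp add: power2_norm_eq_inner wc inner_sum_left inner_sum_right sum_distrib_left algebra_simps inner_commute)
  have nLw: "(norm (L w))\<^sup>2 = (\<Sum>i\<in>?I. \<Sum>j\<in>?I. c i * c j * (L (v i) \<bullet> L (v j)))"
    by (simp add: power2_norm_eq_inner Lwc inner_sum_left inner_sum_right sum_distrib_left algebra_simps inner_commute)
  have nw2: "(norm w)\<^sup>2 = (\<Sum>i\<in>?I. (c i)\<^sup>2)"
  proof -
    have "(\<Sum>i\<in>?I. \<Sum>j\<in>?I. c i * c j * (v i \<bullet> v j)) = (\<Sum>i\<in>?I. \<Sum>j\<in>?I. if j = i then c i * c j else 0)"
      using orthonormal by (intro sum.cong refl) auto
    also have "\<dots> = (\<Sum>i\<in>?I. (c i)\<^sup>2)"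
      by (simp add: power2_eq_square)
    finally show ?thesis using nw by simp
  qed
  define B where "B i j = L (v i) \<bullet> L (v j) - v i \<bullet> v j" for i j
  have Bb: "\<bar>B i j\<bar> \<le> \<epsilon>" if ij: "i \<in> ?I" "j \<in> ?I" for i j
  proof (cases "i = j")
    case True
    have "v i \<bullet> v i = 1" using orthonormal ij by auto
    then have "norm (v i) = 1" by (simp add: norm_eq_sqrt_inner)
    moreover have "(norm (L (v i)))\<^sup>2 = L (v i) \<bullet> L (v i)" by (simp add: power2_norm_eq_inner)
    moreover have "(1 - \<epsilon>) * (norm (v i))\<^sup>2 \<le> (norm (L (v i)))\<^sup>2"
      "(norm (L (v i)))\<^sup>2 \<le> (1 + \<epsilon>) * (norm (v i))\<^sup>2" using single ij(1) by auto
    ultimately show ?thesis using True \<open>v i \<bullet> v i = 1\<close> by (simp add: B_def abs_le_iff)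
  next
    case False
    have o: "v i \<bullet> v j = 0" "v j \<bullet> v i = 0" "v i \<bullet> v i = 1" "v j \<bullet> v j = 1"
      using orthonormal ij False by auto
    have n1: "(norm (v i + v j))\<^sup>2 = 2" "(norm (v i - v j))\<^sup>2 = 2"
      using o by (simp_all add: power2_norm_eq_inner inner_add_left inner_add_right
          inner_diff_left inner_diff_right)
    have n2: "(norm (L (v i + v j)))\<^sup>2 = L (v i) \<bullet> L (v i) + 2 * (L (v i) \<bullet> L (v j)) + L (v j) \<bullet> L (v j)"
      "(norm (L (v i - v j)))\<^sup>2 = L (v i) \<bullet> L (v i) - 2 * (L (v i) \<bullet> L (v j)) + L (v j) \<bullet> L (v j)"
      by (simp_all add: Lv power2_norm_eq_inner inner_add_left inner_add_right
          inner_diff_left inner_diff_right inner_commute)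
    have "(1 - \<epsilon>) * 2 \<le> (norm (L (v i + v j)))\<^sup>2" "(norm (L (v i + v j)))\<^sup>2 \<le> (1 + \<epsilon>) * 2"
      "(1 - \<epsilon>) * 2 \<le> (norm (L (v i - v j)))\<^sup>2" "(norm (L (v i - v j)))\<^sup>2 \<le> (1 + \<epsilon>) * 2"
      using plus[rule_format, OF ij] minus[rule_format, OF ij] unfolding n1 by auto
    then show ?thesis unfolding B_def o n2 by (simp add: n2)
  qed
  have diff: "(norm (L w))\<^sup>2 - (norm w)\<^sup>2 = (\<Sum>i\<in>?I. \<Sum>j\<in>?I. c i * c j * B i j)"
    by (simp add: nLw nw B_def sum_subtractf[symmetric] algebra_simps)
  have "\<bar>(norm (L w))\<^sup>2 - (norm w)\<^sup>2\<bar> \<le> \<epsilon> * real K * (norm w)\<^sup>2"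
    using sum_bound_aux[of ?I B \<epsilon> c] Bb diff nw2 by simp
  then show ?thesis by (simp add: algebra_simps abs_le_iff)
qed

end
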